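(* For all integers $n\ge 3$ and $m\ge 1$, $\alpha_{n,m}\ge\alpha_{n+1,m}$.
   Context: Let $\mathbb{K}$ be a field. For $n\ge 3$, $Q_n$ is the cycle graph on vertices $1,\dots,n$ (edges $\{i,i+1\}$ for $1\le i\le n-1$ and $\{n,1\}$); $B_n$ is the simplicial complex on $\{0,\dots,n+1\}$ whose facets are $\{0,i,j\}$ and $\{n+1,i,j\}$ for each edge $\{i,j\}$ of $Q_n$ (boundary of the bipyramid over the $n$-gon); $I_{B_n}\subset R=\mathbb{K}[x_0,\dots,x_{n+1}]$ is its Stanley-Reisner ideal, generated by $\prod_{i\in\tau}x_i$ over non-faces $\tau$. For a homogeneous ideal $I$, $I^{(m)}=R\cap\bigcap_{P\in\mathrm{Ass}(I)}I^mR_P$, $\alpha(I)=\min\{t:I_t\ne0\}$, and $\alpha_{n,m}:=\alpha(I_{B_n}^{(m)})$. *)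

theory Defs
  imports Main "HOL-Library.Poly_Mapping"
begin

text \<open>Polynomials over a field 'k in variables x_0, x_1, ... are modelled as
 finitely supported maps from monomials (exponent vectors nat =>0 nat) to 'k.\<close>

type_synonym 'k mpoly = "(nat \<Rightarrow>\<^sub>0 nat) \<Rightarrow>\<^sub>0 'k"

definition polyR :: "nat \<Rightarrow> ('k::field) mpoly set" where
  "polyR N = {p. \<forall>a \<in> Poly_Mapping.keys p. \<forall>v \<in> Poly_Mapping.keys a. v \<le> N}"

definition is_ideal :: "nat \<Rightarrow> ('k::field) mpoly set \<Rightarrow> bool" where
  "is_ideal N I \<longleftrightarrow> I \<subseteq> polyR N \<and> 0 \<in> I \<and>
     (\<forall>a\<in>I. \<forall>b\<in>I. a + b \<in> I) \<and> (\<forall>r\<in>polyR N. \<forall>a\<in>I. r * a \<in> I)"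

definition ideal_gen :: "nat \<Rightarrow> ('k::field) mpoly set \<Rightarrow> 'k mpoly set" where
  "ideal_gen N G = \<Inter> {I. is_ideal N I \<and> G \<subseteq> I}"

definition ideal_pow :: "nat \<Rightarrow> ('k::field) mpoly set \<Rightarrow> nat \<Rightarrow> 'k mpoly set" where
  "ideal_pow N I m = ideal_gen N {prod_list xs | xs. length xs = m \<and> set xs \<subseteq> I}"

definition is_prime_ideal :: "nat \<Rightarrow> ('k::field) mpoly set \<Rightarrow> bool" where
  "is_prime_ideal N P \<longleftrightarrow> is_ideal N P \<and> 1 \<notin> P \<and>
     (\<forall>a\<in>polyR N. \<forall>b\<in>polyR N. a * b \<in> P \<longrightarrow> a \<in> P \<or> b \<in> P)"

definition Ass :: "nat \<Rightarrow> ('k::field) mpoly set \<Rightarrow> 'k mpoly set set" where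
  "Ass N I = {P. is_prime_ideal N P \<and> (\<exists>f\<in>polyR N. P = {g \<in> polyR N. g * f \<in> I})}"

text \<open>Symbolic power I^(m) = R \<inter> \<Inter>_{P \<in> Ass I} I^m R_P. Since R is a domain,
 f \<in> R lies in I^m R_P iff s*f \<in> I^m for some s \<in> R - P.\<close>
definition symb_pow :: "nat \<Rightarrow> ('k::field) mpoly set \<Rightarrow> nat \<Rightarrow> 'k mpoly set" where
  "symb_pow N I m = {f \<in> polyR N. \<forall>P \<in> Ass N I. \<exists>s \<in> polyR N - P. s * f \<in> ideal_pow N I m}"

definition mdeg :: "(nat \<Rightarrow>\<^sub>0 nat) \<Rightarrow> nat" where
  "mdeg a = (\<Sum>v\<in>Poly_Mapping.keys a. Poly_Mapping.lookup a v)"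

definition homogeneous :: "nat \<Rightarrow> ('k::field) mpoly \<Rightarrow> bool" where
  "homogeneous t p \<longleftrightarrow> (\<forall>a \<in> Poly_Mapping.keys p. mdeg a = t)"

definition alpha :: "('k::field) mpoly set \<Rightarrow> nat" where
  "alpha I = (LEAST t. \<exists>p \<in> I. p \<noteq> 0 \<and> homogeneous t p)"

definition cycle_edge :: "nat \<Rightarrow> nat \<Rightarrow> nat \<Rightarrow> bool" where
  "cycle_edge n i j \<longleftrightarrow> (1 \<le> i \<and> i \<le> n - 1 \<and> j = i + 1) \<or> (i = n \<and> j = 1)"

definition facets_B :: "nat \<Rightarrow> nat set set" where
  "facets_B n = {{0, i, j} | i j. cycle_edge n i j} \<union> {{n + 1, i, j} | i j. cycle_edge n i j}"

definition face_B :: "nat \<Rightarrow> nat set \<Rightarrow> bool" where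
  "face_B n \<sigma> \<longleftrightarrow> (\<exists>F \<in> facets_B n. \<sigma> \<subseteq> F)"

definition sqfree_monom :: "nat set \<Rightarrow> ('k::field) mpoly" where
  "sqfree_monom \<tau> = Poly_Mapping.single (\<Sum>i\<in>\<tau>. Poly_Mapping.single i 1) 1"

definition SR_ideal_B :: "nat \<Rightarrow> ('k::field) mpoly set" where
  "SR_ideal_B n = ideal_gen (n + 1)
     {sqfree_monom \<tau> | \<tau>. \<tau> \<subseteq> {0..n + 1} \<and> \<not> face_B n \<tau>}"

definition alpha_nm :: "('k::field) itself \<Rightarrow> nat \<Rightarrow> nat \<Rightarrow> nat" where
  "alpha_nm _ n m = alpha (symb_pow (n + 1) (SR_ideal_B n :: 'k mpoly set) m)"

end

theory Submission
  imports Defs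
begin


definition wt :: "nat set \<Rightarrow> (nat \<Rightarrow>\<^sub>0 nat) \<Rightarrow> nat" where
  "wt F a = (\<Sum>v\<in>Poly_Mapping.keys a - F. Poly_Mapping.lookup a v)"

definition Qs :: "nat \<Rightarrow> nat set \<Rightarrow> nat \<Rightarrow> ('k::field) mpoly set" where
  "Qs N F k = {f \<in> polyR N. \<forall>a\<in>Poly_Mapping.keys f. k \<le> wt F a}"

definition restr :: "((nat \<Rightarrow>\<^sub>0 nat) \<Rightarrow> bool) \<Rightarrow> ('k::field) mpoly \<Rightarrow> 'k mpoly" where
  "restr P f = Abs_poly_mapping (\<lambda>a. if P a then Poly_Mapping.lookup f a else 0)"

lemma lookup_restr: "Poly_Mapping.lookup (restr P f) a = (if P a then Poly_Mapping.lookup f a else 0)"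
proof -
  have "finite {a. (if P a then Poly_Mapping.lookup f a else 0) \<noteq> 0}"
    by (rule finite_subset[of _ "{a. Poly_Mapping.lookup f a \<noteq> 0}"]) (auto split: if_splits)
  then show ?thesis unfolding restr_def by simp
qed

lemma keys_restr: "Poly_Mapping.keys (restr P f) = {a \<in> Poly_Mapping.keys f. P a}"
  by (auto simp: in_keys_iff lookup_restr split: if_splits)

lemma restr_split: "f = restr P f + restr (\<lambda>a. \<not> P a) f"
  by (rule poly_mapping_eqI) (simp add: lookup_add lookup_restr)

lemma keys_add_nat: "Poly_Mapping.keys ((a::nat \<Rightarrow>\<^sub>0 nat) + b) = Poly_Mapping.keys a \<union> Poly_Mapping.keys b"
  by (auto simp: in_keys_iff lookup_add)

lemma wt_alt: assumes "finite S" "Poly_Mapping.keys a \<subseteq> S"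
  shows "wt F a = (\<Sum>v\<in>S - F. Poly_Mapping.lookup a v)"
  unfolding wt_def using assms
  by (intro sum.mono_neutral_left) (auto simp: in_keys_iff)

lemma wt_add: "wt F (a + b) = wt F a + wt F b"
proof -
  let ?S = "Poly_Mapping.keys a \<union> Poly_Mapping.keys b"
  have "wt F (a + b) = (\<Sum>v\<in>?S - F. Poly_Mapping.lookup (a+b) v)"
    by (rule wt_alt) (auto simp: keys_add_nat)
  also have "\<dots> = (\<Sum>v\<in>?S - F. Poly_Mapping.lookup a v) + (\<Sum>v\<in>?S - F. Poly_Mapping.lookup b v)"
    by (simp add: lookup_add sum.distrib)
  also have "\<dots> = wt F a + wt F b"
    by (simp add: wt_alt[symmetric])
  finally show ?thesis .
qed

lemma wt_zero[simp]: "wt F 0 = 0"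
  by (simp add: wt_def)

lemma polyR_add: assumes "p \<in> polyR N" "q \<in> polyR N" shows "p + q \<in> polyR N"
  unfolding polyR_def
proof (intro CollectI ballI)
  fix a v assume "a \<in> Poly_Mapping.keys (p + q)" "v \<in> Poly_Mapping.keys a"
  then show "v \<le> N" using assms keys_add[of p q] unfolding polyR_def by blast
qed

lemma polyR_diff: assumes "p \<in> polyR N" "q \<in> polyR N" shows "p - q \<in> polyR N"
  unfolding polyR_def
proof (intro CollectI ballI)
  fix a v assume "a \<in> Poly_Mapping.keys (p - q)" "v \<in> Poly_Mapping.keys a"
  then show "v \<le> N" using assms keys_diff[of p q] unfolding polyR_def by blast
qed

lemma polyR_mult: assumes "p \<in> polyR N" "q \<in> polyR N" shows "p * q \<in> polyR N"
  unfolding polyR_def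
proof (intro CollectI ballI)
  fix a v assume a: "a \<in> Poly_Mapping.keys (p * q)" and v: "v \<in> Poly_Mapping.keys a"
  from a keys_mult[of p q] obtain b c where bc: "a = b + c" "b \<in> Poly_Mapping.keys p" "c \<in> Poly_Mapping.keys q" by blast
  from v bc(1) have "v \<in> Poly_Mapping.keys b \<or> v \<in> Poly_Mapping.keys c" by (simp add: keys_add_nat)
  then show "v \<le> N" using assms bc unfolding polyR_def by blast
qed

lemma polyR_one: "1 \<in> polyR N" and polyR_zero: "0 \<in> polyR N"
  by (auto simp: polyR_def)

lemma polyR_single: "Poly_Mapping.keys a \<subseteq> {..N} \<Longrightarrow> Poly_Mapping.single a c \<in> polyR N"
  by (auto simp: polyR_def)

lemma polyR_restr: "p \<in> polyR N \<Longrightarrow> restr P p \<in> polyR N"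
  by (auto simp: polyR_def keys_restr)

lemma Qs_add: "p \<in> Qs N F k \<Longrightarrow> q \<in> Qs N F k \<Longrightarrow> p + q \<in> Qs N F k"
  unfolding Qs_def using keys_add[of p q] by (auto intro: polyR_add)

lemma Qs_diff: "p \<in> Qs N F k \<Longrightarrow> q \<in> Qs N F k \<Longrightarrow> p - q \<in> Qs N F k"
  unfolding Qs_def using keys_diff[of p q] by (auto intro: polyR_diff)

lemma Qs_mult: assumes "p \<in> Qs N F k" "q \<in> Qs N F l" shows "p * q \<in> Qs N F (k + l)"
  unfolding Qs_def
proof (intro CollectI conjI ballI)
  show "p * q \<in> polyR N" using assms unfolding Qs_def by (blast intro: polyR_mult)
  fix a assume a: "a \<in> Poly_Mapping.keys (p * q)"
  from a keys_mult[of p q] obtain b c where bc: "a = b + c" "b \<in> Poly_Mapping.keys p" "c \<in> Poly_Mapping.keys q" by blast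
  then have "k \<le> wt F b" "l \<le> wt F c" using assms unfolding Qs_def by blast+
  then show "k + l \<le> wt F a" using bc(1) by (simp add: wt_add)
qed

lemma Qs_mono: "p \<in> Qs N F k \<Longrightarrow> l \<le> k \<Longrightarrow> p \<in> Qs N F l"
  unfolding Qs_def by auto

lemma Qs_0: "Qs N F 0 = polyR N"
  unfolding Qs_def by auto

lemma Qs_zero: "0 \<in> Qs N F k"
  unfolding Qs_def by (auto simp: polyR_zero)

lemma exact_mult: assumes "\<forall>a\<in>Poly_Mapping.keys p. wt F a = k" "\<forall>a\<in>Poly_Mapping.keys q. wt F a = l"
  shows "\<forall>a\<in>Poly_Mapping.keys (p * q). wt F a = k + l"
proof
  fix a assume a: "a \<in> Poly_Mapping.keys (p * q)"
  from a keys_mult[of p q] obtain b c where bc: "a = b + c" "b \<in> Poly_Mapping.keys p" "c \<in> Poly_Mapping.keys q" by blast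
  then show "wt F a = k + l" using assms by (simp add: wt_add)
qed



lemma Qs_primary:
  fixes s p :: "'k::field mpoly"
  assumes s: "s \<in> polyR N" "s \<notin> Qs N F 1" and p: "p \<in> polyR N" and sp: "s * p \<in> Qs N F m"
  shows "p \<in> Qs N F m"
proof (rule ccontr)
  assume np: "p \<notin> Qs N F m"
  then obtain a0 where a0: "a0 \<in> Poly_Mapping.keys p" "wt F a0 < m" using p by (auto simp: Qs_def not_le)
  define k where "k = Min (wt F ` Poly_Mapping.keys p)"
  have kle: "\<And>a. a \<in> Poly_Mapping.keys p \<Longrightarrow> k \<le> wt F a" unfolding k_def by simp
  have kin: "k \<in> wt F ` Poly_Mapping.keys p" unfolding k_def using a0 by (intro Min_in) auto
  have km: "k < m" using kle[OF a0(1)] a0(2) by simp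
  define s0 where "s0 = restr (\<lambda>a. wt F a = 0) s"
  define s1 where "s1 = restr (\<lambda>a. \<not> wt F a = 0) s"
  define p0 where "p0 = restr (\<lambda>a. wt F a = k) p"
  define p1 where "p1 = restr (\<lambda>a. \<not> wt F a = k) p"
  have ssplit: "s = s0 + s1" unfolding s0_def s1_def by (rule restr_split)
  have psplit: "p = p0 + p1" unfolding p0_def p1_def by (rule restr_split)
  have ks0: "Poly_Mapping.keys s0 = {a \<in> Poly_Mapping.keys s. wt F a = 0}" unfolding s0_def by (rule keys_restr)
  have ks1: "Poly_Mapping.keys s1 = {a \<in> Poly_Mapping.keys s. wt F a \<noteq> 0}" unfolding s1_def by (rule keys_restr)
  have kp0: "Poly_Mapping.keys p0 = {a \<in> Poly_Mapping.keys p. wt F a = k}" unfolding p0_def by (rule keys_restr)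
  have kp1: "Poly_Mapping.keys p1 = {a \<in> Poly_Mapping.keys p. wt F a \<noteq> k}" unfolding p1_def by (rule keys_restr)
  have s0nz: "s0 \<noteq> 0"
  proof
    assume "s0 = 0"
    then have "\<forall>a\<in>Poly_Mapping.keys s. wt F a \<noteq> 0" using ks0 by auto
    then have "s \<in> Qs N F 1" using s(1) unfolding Qs_def by auto
    then show False using s(2) by blast
  qed
  have p0nz: "p0 \<noteq> 0"
  proof
    assume "p0 = 0"
    then have "\<forall>a\<in>Poly_Mapping.keys p. wt F a \<noteq> k" using kp0 by auto
    then show False using kin by blast
  qed
  have s0Q: "s0 \<in> Qs N F 0" using s(1) unfolding s0_def Qs_0 by (rule polyR_restr)
  have s1Q: "s1 \<in> Qs N F 1" unfolding Qs_def
  proof (intro CollectI conjI ballI)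
    show "s1 \<in> polyR N" using s(1) unfolding s1_def by (rule polyR_restr)
    fix a assume "a \<in> Poly_Mapping.keys s1" then show "1 \<le> wt F a" using ks1 by auto
  qed
  have p0Q: "p0 \<in> Qs N F k" unfolding Qs_def
  proof (intro CollectI conjI ballI)
    show "p0 \<in> polyR N" using p unfolding p0_def by (rule polyR_restr)
    fix a assume "a \<in> Poly_Mapping.keys p0" then show "k \<le> wt F a" using kp0 by auto
  qed
  have p1Q: "p1 \<in> Qs N F (k+1)" unfolding Qs_def
  proof (intro CollectI conjI ballI)
    show "p1 \<in> polyR N" using p unfolding p1_def by (rule polyR_restr)
    fix a assume "a \<in> Poly_Mapping.keys p1"
    then have "a \<in> Poly_Mapping.keys p" "wt F a \<noteq> k" using kp1 by auto
    then show "k + 1 \<le> wt F a" using kle[of a] by linarith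
  qed
  have r1: "s0 * p1 \<in> Qs N F (k+1)" using Qs_mult[OF s0Q p1Q] by simp
  have r2: "s1 * p0 \<in> Qs N F (k+1)" using Qs_mult[OF s1Q p0Q] by simp
  have r3: "s1 * p1 \<in> Qs N F (k+1)" using Qs_mult[OF s1Q p1Q] by (rule Qs_mono) simp
  have spQ: "s * p \<in> Qs N F (k+1)" using sp by (rule Qs_mono) (use km in simp)
  have eq: "s0 * p0 = s * p - (s0 * p1 + s1 * p0 + s1 * p1)"
    unfolding ssplit psplit by (simp add: algebra_simps)
  have inQ: "s0 * p0 \<in> Qs N F (k+1)" unfolding eq
    by (intro Qs_diff spQ Qs_add r1 r2 r3)
  have nz: "s0 * p0 \<noteq> 0" using s0nz p0nz by simp
  have ex: "\<forall>a\<in>Poly_Mapping.keys (s0 * p0). wt F a = 0 + k"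
    by (rule exact_mult) (auto simp: ks0 kp0)
  obtain a where a: "a \<in> Poly_Mapping.keys (s0 * p0)" using nz keys_eq_empty by blast
  then have "k + 1 \<le> wt F a" using inQ unfolding Qs_def by blast
  moreover have "wt F a = 0 + k" using ex a by blast
  ultimately show False by simp
qed



definition ind :: "nat set \<Rightarrow> (nat \<Rightarrow>\<^sub>0 nat)" where
  "ind \<tau> = (\<Sum>i\<in>\<tau>. Poly_Mapping.single i 1)"

lemma sqfree_ind: "sqfree_monom \<tau> = Poly_Mapping.single (ind \<tau>) 1"
  by (simp add: sqfree_monom_def ind_def)

lemma lookup_ind: "finite \<tau> \<Longrightarrow> Poly_Mapping.lookup (ind \<tau>) v = (if v \<in> \<tau> then 1 else 0)"
  unfolding ind_def by (induct rule: finite_induct) (auto simp: lookup_add lookup_single when_def)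

lemma keys_ind: "finite \<tau> \<Longrightarrow> Poly_Mapping.keys (ind \<tau>) = \<tau>"
  by (auto simp: in_keys_iff lookup_ind split: if_splits)

lemma ind_insert: "finite \<tau> \<Longrightarrow> j \<notin> \<tau> \<Longrightarrow> ind (insert j \<tau>) = Poly_Mapping.single j 1 + ind \<tau>"
  unfolding ind_def by simp

lemma wt_ind: assumes "finite \<tau>" shows "wt F (ind \<tau>) = card (\<tau> - F)"
  unfolding wt_def using assms by (simp add: keys_ind lookup_ind)

lemma lookup_le_wt: "v \<notin> F \<Longrightarrow> Poly_Mapping.lookup a v \<le> wt F a"
proof (cases "v \<in> Poly_Mapping.keys a")
  case True
  assume "v \<notin> F"
  then show ?thesis unfolding wt_def using True
    by (intro member_le_sum) auto
qed (simp add: in_keys_iff)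

lemma wt_zero_iff: "wt F a = 0 \<longleftrightarrow> Poly_Mapping.keys a \<subseteq> F"
  unfolding wt_def by (auto simp: in_keys_iff)

lemma ideal_gen_least: "is_ideal N J \<Longrightarrow> G \<subseteq> J \<Longrightarrow> ideal_gen N G \<subseteq> J"
  unfolding ideal_gen_def by blast

lemma ideal_gen_gen: "g \<in> G \<Longrightarrow> r \<in> polyR N \<Longrightarrow> r * g \<in> ideal_gen N G"
  unfolding ideal_gen_def is_ideal_def by blast

lemma ideal_gen_add: "a \<in> ideal_gen N G \<Longrightarrow> b \<in> ideal_gen N G \<Longrightarrow> a + b \<in> ideal_gen N G"
  unfolding ideal_gen_def is_ideal_def by blast

lemma ideal_gen_zero: "0 \<in> ideal_gen N G"
  unfolding ideal_gen_def is_ideal_def by blast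

lemma ideal_gen_sum: "finite A \<Longrightarrow> (\<And>x. x \<in> A \<Longrightarrow> f x \<in> ideal_gen N G) \<Longrightarrow> sum f A \<in> ideal_gen N G"
  by (induct rule: finite_induct) (auto intro: ideal_gen_add ideal_gen_zero)

lemma Qs_ideal: "is_ideal N (Qs N F k)"
  unfolding is_ideal_def
proof (intro conjI ballI)
  show "Qs N F k \<subseteq> polyR N" by (auto simp: Qs_def)
  show "0 \<in> Qs N F k" by (rule Qs_zero)
  show "a + b \<in> Qs N F k" if "a \<in> Qs N F k" "b \<in> Qs N F k" for a b using that by (rule Qs_add)
  show "r * a \<in> Qs N F k" if "r \<in> polyR N" "a \<in> Qs N F k" for r a
    using Qs_mult[of r N F 0 a k] that by (simp add: Qs_0)
qed

lemma poly_sum_monoms: "(f::'k::field mpoly) = (\<Sum>a\<in>Poly_Mapping.keys f. Poly_Mapping.single a (Poly_Mapping.lookup f a))"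
proof (rule poly_mapping_eqI)
  fix k
  have "Poly_Mapping.lookup (\<Sum>a\<in>Poly_Mapping.keys f. Poly_Mapping.single a (Poly_Mapping.lookup f a)) k
      = (\<Sum>a\<in>Poly_Mapping.keys f. if a = k then Poly_Mapping.lookup f a else 0)"
    by (simp add: lookup_sum lookup_single when_def)
  also have "\<dots> = Poly_Mapping.lookup f k" by (simp add: in_keys_iff)
  finally show "Poly_Mapping.lookup f k = Poly_Mapping.lookup (\<Sum>a\<in>Poly_Mapping.keys f. Poly_Mapping.single a (Poly_Mapping.lookup f a)) k" by simp
qed

definition gens :: "nat \<Rightarrow> nat set set \<Rightarrow> ('k::field) mpoly set" where
  "gens N Fs = {sqfree_monom \<tau> | \<tau>. \<tau> \<subseteq> {0..N} \<and> \<not> (\<exists>F\<in>Fs. \<tau> \<subseteq> F)}"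

abbreviation SRI :: "nat \<Rightarrow> nat set set \<Rightarrow> ('k::field) mpoly set" where
  "SRI N Fs \<equiv> ideal_gen N (gens N Fs)"

lemma SRI_sub_Qs: assumes "F \<in> Fs" shows "SRI N Fs \<subseteq> (Qs N F 1 :: 'k::field mpoly set)"
proof (rule ideal_gen_least[OF Qs_ideal])
  show "gens N Fs \<subseteq> (Qs N F 1 :: 'k mpoly set)"
  proof
    fix g :: "'k mpoly" assume "g \<in> gens N Fs"
    then obtain \<tau> where t: "g = sqfree_monom \<tau>" "\<tau> \<subseteq> {0..N}" "\<not> (\<exists>F\<in>Fs. \<tau> \<subseteq> F)"
      unfolding gens_def by blast
    have fin: "finite \<tau>" using t(2) finite_subset by blast
    have "\<not> \<tau> \<subseteq> F" using t(3) assms by blast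
    then have "\<tau> - F \<noteq> {}" by blast
    then have "1 \<le> card (\<tau> - F)" using fin by (simp add: Suc_le_eq card_gt_0_iff)
    moreover have "Poly_Mapping.keys (ind \<tau>) \<subseteq> {..N}" using t(2) fin by (auto simp: keys_ind)
    ultimately show "g \<in> Qs N F 1" unfolding t(1) sqfree_ind Qs_def
      by (auto simp: wt_ind fin intro: polyR_single)
  qed
qed

lemma monom_in_SRI:
  assumes "Poly_Mapping.keys a \<subseteq> {..N}" "\<not> (\<exists>F\<in>Fs. Poly_Mapping.keys a \<subseteq> F)"
  shows "Poly_Mapping.single a c \<in> (SRI N Fs :: 'k::field mpoly set)"
proof -
  let ?t = "Poly_Mapping.keys a"
  have aeq: "a = (a - ind ?t) + ind ?t"
  proof (rule poly_mapping_eqI)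
    fix v show "Poly_Mapping.lookup a v = Poly_Mapping.lookup (a - ind ?t + ind ?t) v"
      by (cases "v \<in> ?t") (auto simp: lookup_add lookup_minus lookup_ind in_keys_iff)
  qed
  have "Poly_Mapping.keys (a - ind ?t) \<subseteq> Poly_Mapping.keys a"
    by (auto simp: in_keys_iff lookup_minus)
  then have r: "Poly_Mapping.single (a - ind ?t) c \<in> (polyR N :: 'k mpoly set)"
    using assms(1) by (intro polyR_single) auto
  have g: "(sqfree_monom ?t :: 'k mpoly) \<in> gens N Fs"
    unfolding gens_def using assms by (auto simp: atLeast0AtMost intro!: exI[of _ "Poly_Mapping.keys a"])
  have "Poly_Mapping.single a c = Poly_Mapping.single (a - ind ?t) c * (sqfree_monom ?t :: 'k mpoly)"
    unfolding sqfree_ind mult_single by (subst aeq) simp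
  then show ?thesis using ideal_gen_gen[OF g r] by simp
qed

lemma in_SRI:
  assumes "f \<in> polyR N" "\<forall>a\<in>Poly_Mapping.keys f. \<not> (\<exists>F\<in>Fs. Poly_Mapping.keys a \<subseteq> F)"
  shows "(f :: 'k::field mpoly) \<in> SRI N Fs"
proof -
  have "(\<Sum>a\<in>Poly_Mapping.keys f. Poly_Mapping.single a (Poly_Mapping.lookup f a)) \<in> (SRI N Fs :: 'k mpoly set)"
  proof (rule ideal_gen_sum)
    fix a assume a: "a \<in> Poly_Mapping.keys f"
    then have "Poly_Mapping.keys a \<subseteq> {..N}" using assms(1) unfolding polyR_def by auto
    then show "Poly_Mapping.single a (Poly_Mapping.lookup f a) \<in> (SRI N Fs :: 'k mpoly set)"
      using assms(2) a by (intro monom_in_SRI) auto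
  qed simp
  then show ?thesis using poly_sum_monoms[of f] by simp
qed

lemma not_in_SRI:
  assumes "f \<in> polyR N" "(f :: 'k::field mpoly) \<notin> SRI N Fs"
  obtains F where "F \<in> Fs" "f \<notin> Qs N F 1"
proof -
  from assms in_SRI obtain a F where a: "a \<in> Poly_Mapping.keys f" "F \<in> Fs" "Poly_Mapping.keys a \<subseteq> F"
    by blast
  then have "wt F a = 0" by (simp add: wt_zero_iff)
  have "f \<notin> Qs N F 1"
  proof
    assume "f \<in> Qs N F 1"
    then have "1 \<le> wt F a" using a(1) unfolding Qs_def by blast
    then show False using \<open>wt F a = 0\<close> by simp
  qed
  then show ?thesis using a(2) that by blast
qed



lemma xF_notin: assumes "finite F" shows "(Poly_Mapping.single (ind F) 1 :: 'k::field mpoly) \<notin> Qs N F 1"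
proof
  assume "(Poly_Mapping.single (ind F) 1 :: 'k mpoly) \<in> Qs N F 1"
  then have "1 \<le> wt F (ind F)" unfolding Qs_def by simp
  then show False using assms by (simp add: wt_ind)
qed

lemma xF_polyR: assumes "finite F" "F \<subseteq> {..N}" shows "(Poly_Mapping.single (ind F) 1 :: 'k::field mpoly) \<in> polyR N"
  using assms by (intro polyR_single) (simp add: keys_ind)

lemma Qs_in_Ass:
  assumes fin: "finite F" and sub: "F \<subseteq> {..N}" and FF: "F \<in> Fs"
    and anti: "\<forall>F'\<in>Fs. F \<subseteq> F' \<longrightarrow> F = F'"
  shows "(Qs N F 1 :: 'k::field mpoly set) \<in> Ass N (SRI N Fs)"
proof -
  let ?x = "Poly_Mapping.single (ind F) 1 :: 'k mpoly"
  have prime: "is_prime_ideal N (Qs N F 1 :: 'k mpoly set)"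
    unfolding is_prime_ideal_def
  proof (intro conjI ballI impI)
    show "is_ideal N (Qs N F 1 :: 'k mpoly set)" by (rule Qs_ideal)
    show "(1 :: 'k mpoly) \<notin> Qs N F 1" unfolding Qs_def by (auto simp: wt_def)
    fix a b :: "'k mpoly" assume ab: "a \<in> polyR N" "b \<in> polyR N" "a * b \<in> Qs N F 1"
    show "a \<in> Qs N F 1 \<or> b \<in> Qs N F 1"
      using Qs_primary[of a N F b 1] ab by blast
  qed
  have eq: "(Qs N F 1 :: 'k mpoly set) = {g \<in> polyR N. g * ?x \<in> SRI N Fs}"
  proof (intro equalityI subsetI)
    fix g :: "'k mpoly" assume g: "g \<in> Qs N F 1"
    then have gR: "g \<in> polyR N" by (simp add: Qs_def)
    have "g * ?x \<in> SRI N Fs"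
    proof (rule in_SRI)
      show "g * ?x \<in> polyR N" using gR xF_polyR[OF fin sub] by (rule polyR_mult)
      show "\<forall>a\<in>Poly_Mapping.keys (g * ?x). \<not> (\<exists>F\<in>Fs. Poly_Mapping.keys a \<subseteq> F)"
      proof (intro ballI notI)
        fix a assume a: "a \<in> Poly_Mapping.keys (g * ?x)" and "\<exists>F\<in>Fs. Poly_Mapping.keys a \<subseteq> F"
        then obtain F' where F': "F' \<in> Fs" "Poly_Mapping.keys a \<subseteq> F'" by blast
        from a keys_mult[of g ?x] obtain b c where bc: "a = b + c" "b \<in> Poly_Mapping.keys g" "c \<in> Poly_Mapping.keys ?x" by blast
        have c: "c = ind F" using bc(3) by (simp split: if_splits)
        have "1 \<le> wt F b" using g bc(2) unfolding Qs_def by blast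
        then obtain j where j: "j \<in> Poly_Mapping.keys b" "j \<notin> F" using wt_zero_iff[of F b] by auto
        have ka: "Poly_Mapping.keys a = Poly_Mapping.keys b \<union> F" using bc(1) c fin by (simp add: keys_add_nat keys_ind)
        then have "F \<subseteq> F'" using F' by blast
        then have "F = F'" using anti F' by blast
        then show False using j ka F' by blast
      qed
    qed
    then show "g \<in> {g \<in> polyR N. g * ?x \<in> SRI N Fs}" using gR by blast
  next
    fix g :: "'k mpoly" assume g: "g \<in> {g \<in> polyR N. g * ?x \<in> SRI N Fs}"
    then have "g * ?x \<in> Qs N F 1" using SRI_sub_Qs[OF FF] by blast
    then have "?x * g \<in> Qs N F 1" by (simp add: mult.commute)
    then show "g \<in> Qs N F 1" using Qs_primary[of ?x N F g 1] xF_polyR[OF fin sub] xF_notin[OF fin] g by blast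
  qed
  show ?thesis unfolding Ass_def using prime eq xF_polyR[OF fin sub] by blast
qed

lemma ideal_pow_sub_Qs:
  assumes FF: "F \<in> Fs"
  shows "ideal_pow N (SRI N Fs) m \<subseteq> (Qs N F m :: 'k::field mpoly set)"
  unfolding ideal_pow_def
proof (rule ideal_gen_least[OF Qs_ideal], rule subsetI)
  fix x :: "'k mpoly" assume "x \<in> {prod_list xs |xs. length xs = m \<and> set xs \<subseteq> SRI N Fs}"
  then obtain xs where xs: "x = prod_list xs" "length xs = m" "set xs \<subseteq> SRI N Fs" by blast
  have "set xs \<subseteq> SRI N Fs \<Longrightarrow> prod_list xs \<in> (Qs N F (length xs) :: 'k mpoly set)"
  proof (induct xs)
    case Nil then show ?case by (simp add: Qs_0 polyR_one)
  next
    case (Cons y ys)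
    then have "y \<in> Qs N F 1" using SRI_sub_Qs[OF FF] by auto
    moreover have "prod_list ys \<in> Qs N F (length ys)" using Cons by auto
    ultimately show ?case using Qs_mult by fastforce
  qed
  then show "x \<in> Qs N F m" using xs by simp
qed

lemma symb_A:
  assumes fin: "finite F" and sub: "F \<subseteq> {..N}" and FF: "F \<in> Fs"
    and anti: "\<forall>F'\<in>Fs. F \<subseteq> F' \<longrightarrow> F = F'"
    and p: "(p :: 'k::field mpoly) \<in> symb_pow N (SRI N Fs) m"
  shows "p \<in> Qs N F m"
proof -
  have A: "(Qs N F 1 :: 'k mpoly set) \<in> Ass N (SRI N Fs)" by (rule Qs_in_Ass[OF fin sub FF anti])
  from p have pR: "p \<in> polyR N" unfolding symb_pow_def by blast
  from p A obtain s where s: "s \<in> polyR N" "s \<notin> Qs N F 1" "s * p \<in> ideal_pow N (SRI N Fs) m"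
    unfolding symb_pow_def by blast
  then have "s * p \<in> Qs N F m" using ideal_pow_sub_Qs[OF FF] by blast
  then show ?thesis using Qs_primary s pR by blast
qed



lemma wt_single1: "j \<notin> F \<Longrightarrow> wt F (Poly_Mapping.single j 1) = 1"
  unfolding wt_def by (subgoal_tac "{j} - F = {j}") auto

lemma IND:
  assumes fin: "finite F" and sub: "F \<subseteq> {..N}" and FF: "F \<in> Fs"
    and anti: "\<forall>F'\<in>Fs. F \<subseteq> F' \<longrightarrow> F = F'"
  shows "Poly_Mapping.keys a \<subseteq> {..N} \<Longrightarrow> k \<le> wt F a \<Longrightarrow>
     \<exists>xs r. length xs = k \<and> set xs \<subseteq> SRI N Fs \<and> r \<in> polyR N \<and>
       Poly_Mapping.single a 1 * (Poly_Mapping.single (ind F) 1) ^ k = r * prod_list (xs :: 'k::field mpoly list)"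
proof (induct k arbitrary: a)
  case 0
  then show ?case by (intro exI[of _ "[]"] exI[of _ "Poly_Mapping.single a 1"]) (simp add: polyR_single)
next
  case (Suc k)
  then have "wt F a \<noteq> 0" by simp
  then have "\<not> Poly_Mapping.keys a \<subseteq> F" using wt_zero_iff[of F a] by simp
  then obtain j where j: "j \<in> Poly_Mapping.keys a" "j \<notin> F" by blast
  define a0 where "a0 = a - Poly_Mapping.single j 1"
  have aeq: "a = a0 + Poly_Mapping.single j 1"
  proof (rule poly_mapping_eqI)
    fix v show "Poly_Mapping.lookup a v = Poly_Mapping.lookup (a0 + Poly_Mapping.single j 1) v"
      using j(1) by (cases "v = j") (auto simp: a0_def lookup_add lookup_minus lookup_single in_keys_iff)
  qed
  have "Poly_Mapping.keys a0 \<subseteq> Poly_Mapping.keys a"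
  proof
    fix x assume "x \<in> Poly_Mapping.keys a0"
    then have "Poly_Mapping.lookup a x - Poly_Mapping.lookup (Poly_Mapping.single j 1) x \<noteq> 0"
      by (simp add: a0_def in_keys_iff lookup_minus)
    then show "x \<in> Poly_Mapping.keys a" by (simp add: in_keys_iff)
  qed
  then have k0: "Poly_Mapping.keys a0 \<subseteq> {..N}" using Suc.prems(1) by blast
  have "wt F a = wt F a0 + 1" using aeq wt_add[of F a0 "Poly_Mapping.single j 1"] wt_single1[OF j(2)] by simp
  then have "k \<le> wt F a0" using Suc.prems(2) by simp
  from Suc.hyps[OF k0 this] obtain xs r where xs: "length xs = k" "set xs \<subseteq> SRI N Fs" "r \<in> polyR N"
    "Poly_Mapping.single a0 1 * (Poly_Mapping.single (ind F) 1) ^ k = r * prod_list (xs :: 'k mpoly list)" by blast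
  define g :: "'k mpoly" where "g = sqfree_monom (insert j F)"
  have jN: "j \<le> N" using j(1) Suc.prems(1) by blast
  have "g \<in> gens N Fs" unfolding gens_def g_def
  proof (intro CollectI exI conjI)
    show "insert j F \<subseteq> {0..N}" using jN sub by auto
    show "\<not> (\<exists>F'\<in>Fs. insert j F \<subseteq> F')"
    proof
      assume "\<exists>F'\<in>Fs. insert j F \<subseteq> F'"
      then obtain F' where "F' \<in> Fs" "insert j F \<subseteq> F'" by blast
      then show False using anti j(2) by blast
    qed
  qed simp
  then have "1 * g \<in> SRI N Fs" by (rule ideal_gen_gen) (rule polyR_one)
  then have gS: "g \<in> SRI N Fs" by simp
  have geq: "g = Poly_Mapping.single (Poly_Mapping.single j 1) 1 * Poly_Mapping.single (ind F) 1"
    unfolding g_def sqfree_ind ind_insert[OF fin j(2)] mult_single by simp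
  have "Poly_Mapping.single a 1 * (Poly_Mapping.single (ind F) 1) ^ Suc k
      = (Poly_Mapping.single a0 1 * (Poly_Mapping.single (ind F) 1) ^ k) * g"
  proof -
    have sa: "(Poly_Mapping.single a 1 :: 'k mpoly) = Poly_Mapping.single a0 1 * Poly_Mapping.single (Poly_Mapping.single j 1) 1"
      by (subst aeq) (simp add: mult_single)
    show ?thesis unfolding geq sa by (simp add: algebra_simps)
  qed
  also have "\<dots> = r * prod_list (g # xs)" using xs(4) by (simp add: algebra_simps)
  finally show ?case using xs gS by (intro exI[of _ "g # xs"] exI[of _ r]) auto
qed

lemma symb_B:
  assumes fin: "\<forall>F\<in>Fs. finite F" and sub: "\<forall>F\<in>Fs. F \<subseteq> {..N}"
    and anti: "\<forall>F\<in>Fs. \<forall>F'\<in>Fs. F \<subseteq> F' \<longrightarrow> F = F'"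
    and a: "Poly_Mapping.keys a \<subseteq> {..N}" and wa: "\<forall>F\<in>Fs. m \<le> wt F a"
  shows "(Poly_Mapping.single a 1 :: 'k::field mpoly) \<in> symb_pow N (SRI N Fs) m"
  unfolding symb_pow_def
proof (intro CollectI conjI ballI)
  show "(Poly_Mapping.single a 1 :: 'k mpoly) \<in> polyR N" using a by (rule polyR_single)
  fix P :: "'k mpoly set" assume P: "P \<in> Ass N (SRI N Fs)"
  then obtain g where g: "g \<in> polyR N" "P = {h \<in> polyR N. h * g \<in> SRI N Fs}" and pr: "is_prime_ideal N P"
    unfolding Ass_def by blast
  have "1 \<notin> P" using pr unfolding is_prime_ideal_def by blast
  then have "g \<notin> SRI N Fs" using g polyR_one by auto
  then obtain F where F: "F \<in> Fs" "g \<notin> Qs N F 1" using not_in_SRI[OF g(1)] by blast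
  have PQ: "P \<subseteq> Qs N F 1"
  proof
    fix h assume "h \<in> P"
    then have h: "h \<in> polyR N" "h * g \<in> SRI N Fs" using g by auto
    then have "g * h \<in> Qs N F 1" using SRI_sub_Qs[OF F(1)] by (auto simp: mult.commute)
    then show "h \<in> Qs N F 1" using Qs_primary[of g N F h 1] g(1) F(2) h(1) by blast
  qed
  let ?x = "Poly_Mapping.single (ind F) 1 :: 'k mpoly"
  have finF: "finite F" and subF: "F \<subseteq> {..N}" using fin sub F by auto
  have xR: "?x \<in> polyR N" by (rule xF_polyR[OF finF subF])
  have sR: "?x ^ m \<in> polyR N" by (induct m) (auto intro: polyR_mult xR polyR_one)
  have ex: "\<forall>b\<in>Poly_Mapping.keys (?x ^ k). wt F b = 0" for k
  proof (induct k)
    case 0 then show ?case by (simp add: wt_def)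
  next
    case (Suc k)
    have h0: "\<forall>b\<in>Poly_Mapping.keys ?x. wt F b = 0" using finF by (simp add: wt_ind)
    show ?case using exact_mult[OF h0 Suc] by simp
  qed
  have "?x \<noteq> 0"
  proof
    assume "?x = 0"
    then have "Poly_Mapping.keys ?x = {}" by simp
    then show False by simp
  qed
  then have "?x ^ m \<noteq> 0" by simp
  then obtain b where b: "b \<in> Poly_Mapping.keys (?x ^ m)" using keys_eq_empty by blast
  have "?x ^ m \<notin> Qs N F 1"
  proof
    assume "?x ^ m \<in> Qs N F 1"
    then have "1 \<le> wt F b" using b unfolding Qs_def by blast
    then show False using ex b by force
  qed
  then have sP: "?x ^ m \<notin> P" using PQ by blast
  obtain xs r where xs: "length xs = m" "set xs \<subseteq> SRI N Fs" "r \<in> polyR N"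
    "Poly_Mapping.single a 1 * ?x ^ m = r * prod_list (xs :: 'k mpoly list)"
    using IND[OF finF subF F(1)] anti F(1) a wa F(1) by blast
  have "?x ^ m * Poly_Mapping.single a 1 \<in> ideal_pow N (SRI N Fs) m"
    unfolding ideal_pow_def using xs by (auto simp: mult.commute intro!: ideal_gen_gen)
  then show "\<exists>s\<in>polyR N - P. s * Poly_Mapping.single a 1 \<in> ideal_pow N (SRI N Fs) m"
    using sR sP by blast
qed



lemma cycle_edge_props: assumes "n \<ge> 3" "cycle_edge n i j"
  shows "1 \<le> i" "i \<le> n" "1 \<le> j" "j \<le> n" "i \<noteq> j"
  using assms unfolding cycle_edge_def by auto

lemma facets_B_iff: "F \<in> facets_B n \<longleftrightarrow> (\<exists>c i j. (c = 0 \<or> c = n + 1) \<and> cycle_edge n i j \<and> F = {c, i, j})"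
  unfolding facets_B_def by blast

lemma facet_props: assumes "n \<ge> 3" "F \<in> facets_B n"
  shows "finite F" "F \<subseteq> {..n+1}" "card F = 3"
proof -
  obtain c i j where cij: "c = 0 \<or> c = n + 1" "cycle_edge n i j" "F = {c, i, j}"
    using assms(2) unfolding facets_B_iff by blast
  note e = cycle_edge_props[OF assms(1) cij(2)]
  show "finite F" using cij by simp
  show "F \<subseteq> {..n+1}" using cij e by auto
  have "c \<noteq> i" "c \<noteq> j" using cij(1) e by auto
  then show "card F = 3" using cij(3) e(5) by simp
qed

lemma facet_anti: assumes "n \<ge> 3" "F \<in> facets_B n" "F' \<in> facets_B n" "F \<subseteq> F'"
  shows "F = F'"
proof (rule card_subset_eq)
  show "finite F'" "F \<subseteq> F'" using facet_props[OF assms(1,3)] assms(4) by auto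
  show "card F = card F'" using facet_props(3)[OF assms(1,2)] facet_props(3)[OF assms(1,3)] by simp
qed

lemma SR_eq: "SR_ideal_B n = SRI (n + 1) (facets_B n)"
  unfolding SR_ideal_B_def gens_def face_B_def ..

lemma wt_plus_sum: assumes "finite S" "F \<subseteq> S" "Poly_Mapping.keys a \<subseteq> S"
  shows "wt F a + (\<Sum>v\<in>F. Poly_Mapping.lookup a v) = (\<Sum>v\<in>S. Poly_Mapping.lookup a v)"
proof -
  have fF: "finite F" using assms finite_subset by blast
  have "wt F a = (\<Sum>v\<in>S - F. Poly_Mapping.lookup a v)" by (rule wt_alt[OF assms(1,3)])
  moreover have "sum (Poly_Mapping.lookup a) S = sum (Poly_Mapping.lookup a) (S - F) + sum (Poly_Mapping.lookup a) F"
    by (rule sum.subset_diff[OF assms(2,1)])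
  ultimately show ?thesis by simp
qed

lemma mdeg_alt: assumes "finite S" "Poly_Mapping.keys a \<subseteq> S"
  shows "mdeg a = (\<Sum>v\<in>S. Poly_Mapping.lookup a v)"
  unfolding mdeg_def using assms
  by (intro sum.mono_neutral_left) (auto simp: in_keys_iff)

lemma sum3: "x \<noteq> y \<Longrightarrow> x \<noteq> z \<Longrightarrow> y \<noteq> z \<Longrightarrow> sum f {x, y, z} = f x + f y + (f z :: nat)"
  by simp


lemma combinatorial:
  assumes n: "n \<ge> 3" and ka: "Poly_Mapping.keys a \<subseteq> {..n+1}"
    and wa: "\<forall>F\<in>facets_B n. m \<le> wt F a"
  obtains a' where "Poly_Mapping.keys a' \<subseteq> {..n+2}" "mdeg a' = mdeg a"
    "\<forall>F\<in>facets_B (n+1). m \<le> wt F a'"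
proof -
  let ?L = "Poly_Mapping.lookup a"
  define f where "f v = (if v = n+2 then ?L (n+1) else if v = n+1 then 0 else ?L v)" for v
  have fin: "finite {v. f v \<noteq> 0}"
    by (rule finite_subset[of _ "insert (n+2) (Poly_Mapping.keys a)"]) (auto simp: f_def in_keys_iff split: if_splits)
  define a' where "a' = Abs_poly_mapping f"
  have L': "Poly_Mapping.lookup a' = f" unfolding a'_def using fin by simp
  have La: "?L v = 0" if "v > n + 1" for v
  proof (rule ccontr)
    assume "?L v \<noteq> 0"
    then have "v \<in> Poly_Mapping.keys a" by (simp add: in_keys_iff)
    then show False using ka that by auto
  qed
  have ka': "Poly_Mapping.keys a' \<subseteq> {..n+2}"
  proof
    fix v assume "v \<in> Poly_Mapping.keys a'"
    then have "f v \<noteq> 0" by (simp add: in_keys_iff L')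
    show "v \<in> {..n+2}"
    proof (rule ccontr)
      assume "v \<notin> {..n+2}"
      then have "v > n + 2" by simp
      then have "f v = 0" using La[of v] by (simp add: f_def)
      then show False using \<open>f v \<noteq> 0\<close> by simp
    qed
  qed
  have T: "(\<Sum>v\<in>{..n+2}. f v) = (\<Sum>v\<in>{..n+1}. ?L v)"
  proof -
    have "(\<Sum>v\<in>{..n}. f v) = (\<Sum>v\<in>{..n}. ?L v)" by (rule sum.cong) (auto simp: f_def)
    moreover have "{..n+2} = insert (n+2) (insert (n+1) {..n})" by auto
    moreover have "{..n+1} = insert (n+1) {..n}" by auto
    ultimately show ?thesis by (simp add: f_def)
  qed
  have mdeg': "mdeg a' = mdeg a"
    using mdeg_alt[OF _ ka', of] mdeg_alt[OF _ ka] T by (simp add: L')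
  have wt': "m \<le> wt F' a'" if F': "F' \<in> facets_B (n+1)" for F'
  proof -
    have n1: "n + 1 \<ge> 3" using n by simp
    obtain F where F: "F \<in> facets_B n" and le: "(\<Sum>v\<in>F'. f v) \<le> (\<Sum>v\<in>F. ?L v)"
    proof -
      obtain c' i j where cij: "c' = 0 \<or> c' = n + 2" "cycle_edge (n+1) i j" "F' = {c', i, j}"
        using F' unfolding facets_B_iff by auto
      note e = cycle_edge_props[OF n1 cij(2)]
      define c where "c = (if c' = 0 then 0 else n + 1)"
      have c: "c = 0 \<or> c = n + 1" unfolding c_def by simp
      have fc: "f c' = ?L c" using cij(1) by (auto simp: f_def c_def)
      have cne: "c' \<noteq> i" "c' \<noteq> j" using cij e by auto
      have cne2: "c \<noteq> n" "c \<noteq> 1" using c n e cij(1) cne by (auto simp: c_def)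
      have sF': "(\<Sum>v\<in>F'. f v) = f c' + f i + f j" using cij(3) cne e by (simp add: sum3)
      show thesis
      proof (cases "i \<le> n - 1 \<and> j = i + 1")
        case True
        have ce: "cycle_edge n i j" using True e unfolding cycle_edge_def by auto
        have "{c, i, j} \<in> facets_B n" unfolding facets_B_iff using c ce by blast
        moreover have "(\<Sum>v\<in>{c,i,j}. ?L v) = ?L c + ?L i + ?L j"
        proof (rule sum3)
          show "c \<noteq> i" "c \<noteq> j" "i \<noteq> j" using True e c n by auto
        qed
        moreover have "f i = ?L i" "f j = ?L j" using True e n by (auto simp: f_def)
        ultimately show thesis using that[of "{c,i,j}"] sF' fc by simp
      next
        case False
        then have cases: "(i = n \<and> j = n + 1) \<or> (i = n + 1 \<and> j = 1)"
          using cij(2) unfolding cycle_edge_def by auto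
        have ce: "cycle_edge n n 1" unfolding cycle_edge_def by simp
        have "{c, n, 1} \<in> facets_B n" unfolding facets_B_iff using c ce by blast
        moreover have "(\<Sum>v\<in>{c,n,1}. ?L v) = ?L c + ?L n + ?L 1"
          using cne2 n by (intro sum3) auto
        moreover have "f i + f j \<le> ?L n + ?L 1" using cases n by (auto simp: f_def)
        ultimately show thesis using that[of "{c,n,1}"] sF' fc by simp
      qed
    qed
    have "wt F a + (\<Sum>v\<in>F. ?L v) = (\<Sum>v\<in>{..n+1}. ?L v)"
      by (rule wt_plus_sum) (use facet_props[OF n F] ka in auto)
    moreover have "wt F' a' + (\<Sum>v\<in>F'. f v) = (\<Sum>v\<in>{..n+2}. f v)"
      using wt_plus_sum[of "{..n+2}" F' a'] facet_props[OF n1 F'] ka' by (simp add: L')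
    moreover have "m \<le> wt F a" using wa F by blast
    ultimately show ?thesis using T le by linarith
  qed
  show thesis using that[OF ka' mdeg'] wt' by blast
qed



lemma homog_single: "homogeneous (mdeg a) (Poly_Mapping.single a (1::'k::field))"
  unfolding homogeneous_def by simp

lemma single_nz: "(Poly_Mapping.single a (1::'k::field)) \<noteq> 0"
proof
  assume "Poly_Mapping.single a (1::'k) = 0"
  then have "Poly_Mapping.keys (Poly_Mapping.single a (1::'k)) = {}" by simp
  then show False by simp
qed

lemma symb_B_n:
  assumes n: "n \<ge> 3" and a: "Poly_Mapping.keys a \<subseteq> {..n+1}" and wa: "\<forall>F\<in>facets_B n. m \<le> wt F a"
  shows "(Poly_Mapping.single a 1 :: 'k::field mpoly) \<in> symb_pow (n+1) (SR_ideal_B n) m"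
  unfolding SR_eq
proof (rule symb_B[OF _ _ _ a wa])
  show "\<forall>F\<in>facets_B n. finite F" using facet_props(1)[OF n] by blast
  show "\<forall>F\<in>facets_B n. F \<subseteq> {..n + 1}" using facet_props(2)[OF n] by blast
  show "\<forall>F\<in>facets_B n. \<forall>F'\<in>facets_B n. F \<subseteq> F' \<longrightarrow> F = F'" using facet_anti[OF n] by blast
qed

lemma symb_A_n:
  assumes n: "n \<ge> 3" and p: "(p :: 'k::field mpoly) \<in> symb_pow (n+1) (SR_ideal_B n) m"
    and F: "F \<in> facets_B n"
  shows "p \<in> Qs (n+1) F m"
proof (rule symb_A[OF facet_props(1,2)[OF n F] F])
  show "\<forall>F'\<in>facets_B n. F \<subseteq> F' \<longrightarrow> F = F'" using facet_anti[OF n F] by blast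
  show "p \<in> symb_pow (n + 1) (SRI (n + 1) (facets_B n)) m" using p unfolding SR_eq .
qed

lemma exists_elem:
  assumes n: "n \<ge> 3"
  shows "\<exists>t. \<exists>p\<in>(symb_pow (n+1) (SR_ideal_B n) m :: 'k::field mpoly set). p \<noteq> 0 \<and> homogeneous t p"
proof -
  define a where "a = Poly_Mapping.single 0 m + Poly_Mapping.single (n+1) m"
  have ka: "Poly_Mapping.keys a \<subseteq> {..n+1}"
    by (auto simp: a_def keys_add_nat)
  have wa: "\<forall>F\<in>facets_B n. m \<le> wt F a"
  proof
    fix F assume F: "F \<in> facets_B n"
    obtain c i j where cij: "c = 0 \<or> c = n + 1" "cycle_edge n i j" "F = {c, i, j}"
      using F unfolding facets_B_iff by blast
    note e = cycle_edge_props[OF n cij(2)]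
    show "m \<le> wt F a"
    proof (cases "c = 0")
      case True
      then have "n + 1 \<notin> F" using cij e by auto
      then have "Poly_Mapping.lookup a (n+1) \<le> wt F a" by (rule lookup_le_wt)
      then show ?thesis by (simp add: a_def lookup_add)
    next
      case False
      then have "0 \<notin> F" using cij e by auto
      then have "Poly_Mapping.lookup a 0 \<le> wt F a" by (rule lookup_le_wt)
      then show ?thesis by (simp add: a_def lookup_add)
    qed
  qed
  have "(Poly_Mapping.single a 1 :: 'k mpoly) \<in> symb_pow (n+1) (SR_ideal_B n) m"
    by (rule symb_B_n[OF n ka wa])
  moreover have "(Poly_Mapping.single a 1 :: 'k mpoly) \<noteq> 0"
    by (rule single_nz)
  ultimately show ?thesis using homog_single by blast
qed

theorem proposition3p13:
  fixes n m :: nat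
  assumes "n \<ge> 3" and "m \<ge> 1"
  shows "alpha_nm TYPE('k::field) n m \<ge> alpha_nm TYPE('k) (n + 1) m"
proof -
  have n: "n \<ge> 3" by fact
  let ?P = "\<lambda>t. \<exists>p\<in>(symb_pow (n+1) (SR_ideal_B n) m :: 'k mpoly set). p \<noteq> 0 \<and> homogeneous t p"
  let ?t = "LEAST t. ?P t"
  have "?P ?t" using exists_elem[OF n] by (rule LeastI_ex)
  then obtain p where p: "p \<in> (symb_pow (n+1) (SR_ideal_B n) m :: 'k mpoly set)" "p \<noteq> 0" "homogeneous ?t p"
    by blast
  obtain a where a: "a \<in> Poly_Mapping.keys p" using p(2) keys_eq_empty by blast
  have da: "mdeg a = ?t" using p(3) a unfolding homogeneous_def by blast
  have ka: "Poly_Mapping.keys a \<subseteq> {..n+1}" using p(1) a unfolding symb_pow_def polyR_def by auto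
  have wa: "\<forall>F\<in>facets_B n. m \<le> wt F a"
  proof
    fix F assume F: "F \<in> facets_B n"
    have "p \<in> Qs (n+1) F m" by (rule symb_A_n[OF n p(1) F])
    then show "m \<le> wt F a" using a unfolding Qs_def by blast
  qed
  obtain a' where a': "Poly_Mapping.keys a' \<subseteq> {..n+2}" "mdeg a' = mdeg a"
    "\<forall>F\<in>facets_B (n+1). m \<le> wt F a'"
    using combinatorial[OF n ka wa] by blast
  have n1: "n + 1 \<ge> 3" using n by simp
  have "(Poly_Mapping.single a' 1 :: 'k mpoly) \<in> symb_pow (n+1+1) (SR_ideal_B (n+1)) m"
    by (rule symb_B_n[OF n1]) (use a' in auto)
  moreover have "(Poly_Mapping.single a' 1 :: 'k mpoly) \<noteq> 0"
    by (rule single_nz)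
  moreover have "homogeneous ?t (Poly_Mapping.single a' (1::'k))"
    using homog_single[of a'] a'(2) da by simp
  ultimately have "\<exists>p\<in>(symb_pow (n+1+1) (SR_ideal_B (n+1)) m :: 'k mpoly set). p \<noteq> 0 \<and> homogeneous ?t p"
    by blast
  then have "alpha (symb_pow (n+1+1) (SR_ideal_B (n+1)) m :: 'k mpoly set) \<le> ?t"
    unfolding alpha_def by (rule Least_le)
  then show ?thesis unfolding alpha_nm_def alpha_def by simp
qed

end
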